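(* Let $n\ge 2$, $K\ge 1$ and $\lambda_-<\lambda_+$ in $(-1,1)$. The set $\mathcal{G}_{\lambda_-,\lambda_+}$ is non-convex.
   Context: $\mathcal{W}_{\lambda_-,\lambda_+}$ denotes the set of symmetric matrices $W\in\mathbb{R}^{n\times n}$ with $\lambda_1(W)=1$ with eigenvector $\mathbf{1}/\sqrt{n}$ and $\lambda_-\le\lambda_n(W)\le\dots\le\lambda_2(W)\le\lambda_+$. $\mathcal{G}_{\lambda_-,\lambda_+}$ is the set of all symmetric positive semidefinite matrices of the form $G_c=\begin{bmatrix}P_x^TP_x & P_x^TP_y\\ P_y^TP_x & P_y^TP_y\end{bmatrix}$, where for some dimension $d\ge1$, $P_x=[x_1^1\dots x_n^1\dots x_1^K\dots x_n^K]\in\mathbb{R}^{d\times nK}$ and $P_y=[y_1^1\dots y_n^1\dots y_1^K\dots y_n^K]\in\mathbb{R}^{d\times nK}$, such that there exists $W\in\mathcal{W}_{\lambda_-,\lambda_+}$ with $\mathbf{y}^k=(W\otimes I_d)\mathbf{x}^k$ for all $k=1,\dots,K$, where $\mathbf{x}^k=(x_1^k,\dots,x_n^k)\in\mathbb{R}^{nd}$ and similarly for $\mathbf{y}^k$. *)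

theory Defs
  imports "Jordan_Normal_Form.Char_Poly"
begin

definition ones_vec :: "nat \<Rightarrow> real vec" where
  "ones_vec n = vec n (\<lambda>_. 1)"

text \<open>W_{lm,lp}: symmetric n x n real matrices with top eigenvalue 1 with eigenvector 1
  (equivalently 1/sqrt n), the remaining n-1 eigenvalues (with multiplicity, i.e. roots of
  the characteristic polynomial) lying in [lm, lp].\<close>
definition W_set :: "nat \<Rightarrow> real \<Rightarrow> real \<Rightarrow> real mat set" where
  "W_set n lm lp = {W. W \<in> carrier_mat n n \<and> transpose_mat W = W \<and>
     W *\<^sub>v ones_vec n = ones_vec n \<and>
     (\<exists>M :: real multiset. size M = n - 1 \<and>
        char_poly W = [:-1, 1:] * (\<Prod>a\<in>#M. [:-a, 1:]) \<and>
        (\<forall>a\<in>#M. lm \<le> a \<and> a \<le> lp))}"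

definition psd_mat :: "real mat \<Rightarrow> bool" where
  "psd_mat G \<longleftrightarrow> G \<in> carrier_mat (dim_row G) (dim_row G) \<and> transpose_mat G = G \<and>
     (\<forall>v \<in> carrier_vec (dim_row G). v \<bullet> (G *\<^sub>v v) \<ge> 0)"

text \<open>G_{lm,lp}. Columns of Px (resp. Py) are x_1^1..x_n^1..x_1^K..x_n^K, 0-indexed as
  column k*n+i for k<K, i<n. The condition y^k = (W \<otimes> I_d) x^k is written out entrywise.\<close>
definition G_set :: "nat \<Rightarrow> nat \<Rightarrow> real \<Rightarrow> real \<Rightarrow> real mat set" where
  "G_set n K lm lp = {G. \<exists>(d::nat) Px Py W. d \<ge> 1 \<and>
     Px \<in> carrier_mat d (n * K) \<and> Py \<in> carrier_mat d (n * K) \<and>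
     W \<in> W_set n lm lp \<and>
     (\<forall>k<K. \<forall>i<n. \<forall>r<d. Py $$ (r, k * n + i) = (\<Sum>j<n. W $$ (i, j) * Px $$ (r, k * n + j))) \<and>
     G = four_block_mat (transpose_mat Px * Px) (transpose_mat Px * Py)
                        (transpose_mat Py * Px) (transpose_mat Py * Py) \<and>
     psd_mat G}"

definition convex_mat_set :: "real mat set \<Rightarrow> bool" where
  "convex_mat_set S \<longleftrightarrow> (\<forall>A\<in>S. \<forall>B\<in>S. \<forall>t::real. 0 \<le> t \<and> t \<le> 1 \<longrightarrow>
     t \<cdot>\<^sub>m A + (1 - t) \<cdot>\<^sub>m B \<in> S)"

end

theory Submission
  imports Defs
begin

definition Wc :: "nat \<Rightarrow> real \<Rightarrow> real mat" where
  "Wc n c = mat n n (\<lambda>(i,j). (if i = j then c else 0) + (1 - c) / real n)"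
definition Pm :: "nat \<Rightarrow> real mat" where
  "Pm n = mat n n (\<lambda>(i,k). if k = 0 then 1 else (if i = 0 then 1 else 0) - (if i = k then 1 else 0))"
definition Qm :: "nat \<Rightarrow> real mat" where
  "Qm n = mat n n (\<lambda>(k,j). 1 / real n - (if k \<noteq> 0 \<and> k = j then 1 else 0))"
definition Dm :: "nat \<Rightarrow> real \<Rightarrow> real mat" where
  "Dm n c = mat n n (\<lambda>(i,j). if i = j then (if i = 0 then 1 else c) else 0)"

lemma sum_split0: "(n::nat) \<ge> 1 \<Longrightarrow> (\<Sum>k<n. f k) = f 0 + (\<Sum>k\<in>{1..<n}. f k)"
  using sum.atLeast_Suc_lessThan[where m=0 and n=n and g=f] by (simp add: atLeast0LessThan)

lemma key_sum: assumes n: "n \<ge> 1" and i: "i < n" and j: "j < n"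
  shows "(\<Sum>k\<in>{1..<n}. ((if i = 0 then 1 else 0) - (if i = k then 1 else 0)) * (1 / real n - (if k = j then 1 else 0)))
     = (if i = j then 1 else 0) - 1 / real n"
proof (cases "i = 0")
  case True
  have "(\<Sum>k\<in>{1..<n}. ((if i = 0 then 1 else 0) - (if i = k then 1 else 0)) * (1 / real n - (if k = j then 1 else 0)))
     = (\<Sum>k\<in>{1..<n}. 1 / real n - (if k = j then 1 else 0))"
    by (rule sum.cong) (auto simp: True)
  also have "\<dots> = real (n - 1) / real n - (if j \<in> {1..<n} then 1 else 0)"
    by (simp add: sum_subtractf)
  also have "\<dots> = (if i = j then 1 else 0) - 1 / real n"
    using True n j by (auto simp: of_nat_diff field_simps)
  finally show ?thesis .
next
  case False
  have "(\<Sum>k\<in>{1..<n}. ((if i = 0 then 1 else 0) - (if i = k then 1 else 0)) * (1 / real n - (if k = j then 1 else 0)))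
     = (\<Sum>k\<in>{1..<n}. - (if i = k then 1 / real n - (if k = j then 1 else 0) else 0))"
    by (rule sum.cong) (auto simp: False)
  also have "\<dots> = (if i = j then 1 else 0) - 1 / real n"
    using False i by (simp add: sum_negf)
  finally show ?thesis .
qed

lemma Q_entry: "k < n \<Longrightarrow> j < n \<Longrightarrow> k \<noteq> 0 \<Longrightarrow> Qm n $$ (k,j) = 1 / real n - (if k = j then 1 else 0)"
  by (auto simp: Qm_def)

lemma PQ: assumes n: "n \<ge> 1" shows "Pm n * Qm n = 1\<^sub>m n"
proof (rule eq_matI)
  fix i j assume ij: "i < dim_row (1\<^sub>m n)" "j < dim_col (1\<^sub>m n)"
  hence i: "i < n" and j: "j < n" by auto
  have "(Pm n * Qm n) $$ (i,j) = (\<Sum>k<n. Pm n $$ (i,k) * Qm n $$ (k,j))"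
    using i j by (simp add: Pm_def Qm_def scalar_prod_def atLeast0LessThan)
  also have "\<dots> = Pm n $$ (i,0) * Qm n $$ (0,j) + (\<Sum>k\<in>{1..<n}. Pm n $$ (i,k) * Qm n $$ (k,j))"
    by (rule sum_split0[OF n])
  also have "(\<Sum>k\<in>{1..<n}. Pm n $$ (i,k) * Qm n $$ (k,j)) = 
    (\<Sum>k\<in>{1..<n}. ((if i = 0 then 1 else 0) - (if i = k then 1 else 0)) * (1 / real n - (if k = j then 1 else 0)))"
    by (rule sum.cong) (use i j in \<open>auto simp: Pm_def Qm_def\<close>)
  also have "\<dots> = (if i = j then 1 else 0) - 1 / real n" by (rule key_sum[OF n i j])
  finally show "(Pm n * Qm n) $$ (i,j) = 1\<^sub>m n $$ (i,j)"
    using i j n by (simp add: Pm_def Qm_def)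
qed (auto simp: Pm_def Qm_def)

lemma PDQ: assumes n: "n \<ge> 1" shows "Wc n c = Pm n * Dm n c * Qm n"
proof -
  have PD: "Pm n * Dm n c = mat n n (\<lambda>(i,k). Pm n $$ (i,k) * (if k = 0 then 1 else c))"
  proof (rule eq_matI)
    fix i k assume "i < dim_row (mat n n (\<lambda>(i,k). Pm n $$ (i,k) * (if k = 0 then 1 else c)))"
      "k < dim_col (mat n n (\<lambda>(i,k). Pm n $$ (i,k) * (if k = 0 then 1 else c)))"
    hence i: "i < n" and k: "k < n" by auto
    have "(Pm n * Dm n c) $$ (i,k) = (\<Sum>l<n. Pm n $$ (i,l) * Dm n c $$ (l,k))"
      using i k by (simp add: Pm_def Dm_def scalar_prod_def atLeast0LessThan)
    also have "\<dots> = (\<Sum>l<n. if l = k then Pm n $$ (i,l) * (if k = 0 then 1 else c) else 0)"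
      by (rule sum.cong) (use k in \<open>auto simp: Dm_def\<close>)
    also have "\<dots> = Pm n $$ (i,k) * (if k = 0 then 1 else c)" using k by simp
    finally show "(Pm n * Dm n c) $$ (i,k) = mat n n (\<lambda>(i,k). Pm n $$ (i,k) * (if k = 0 then 1 else c)) $$ (i,k)"
      using i k by simp
  qed (auto simp: Pm_def Dm_def)
  show ?thesis
  proof (rule eq_matI)
    fix i j assume "i < dim_row (Pm n * Dm n c * Qm n)" "j < dim_col (Pm n * Dm n c * Qm n)"
    hence i: "i < n" and j: "j < n" by (auto simp: Pm_def Qm_def)
    have "(Pm n * Dm n c * Qm n) $$ (i,j) = (\<Sum>k<n. Pm n $$ (i,k) * (if k = 0 then 1 else c) * Qm n $$ (k,j))"
      unfolding PD using i j by (simp add: Qm_def scalar_prod_def atLeast0LessThan)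
    also have "\<dots> = Pm n $$ (i,0) * 1 * Qm n $$ (0,j) + (\<Sum>k\<in>{1..<n}. Pm n $$ (i,k) * (if k = 0 then 1 else c) * Qm n $$ (k,j))"
      by (subst sum_split0[OF n]) simp
    also have "(\<Sum>k\<in>{1..<n}. Pm n $$ (i,k) * (if k = 0 then 1 else c) * Qm n $$ (k,j)) = 
      c * (\<Sum>k\<in>{1..<n}. ((if i = 0 then 1 else 0) - (if i = k then 1 else 0)) * (1 / real n - (if k = j then 1 else 0)))"
      unfolding sum_distrib_left
      by (rule sum.cong) (use i j in \<open>auto simp: Pm_def Qm_def\<close>)
    also have "\<dots> = c * ((if i = j then 1 else 0) - 1 / real n)" by (simp only: key_sum[OF n i j])
    finally show "Wc n c $$ (i,j) = (Pm n * Dm n c * Qm n) $$ (i,j)"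
      using i j n by (simp add: Pm_def Qm_def Wc_def field_simps)
  qed (auto simp: Wc_def Pm_def Qm_def)
qed

lemma char_poly_Wc: assumes n: "n \<ge> 1"
  shows "char_poly (Wc n c) = [:-1, 1:] * [:-c, 1:] ^ (n - 1)"
proof -
  have car: "Pm n \<in> carrier_mat n n" "Qm n \<in> carrier_mat n n" "Dm n c \<in> carrier_mat n n" "Wc n c \<in> carrier_mat n n"
    by (auto simp: Pm_def Qm_def Dm_def Wc_def)
  have QP: "Qm n * Pm n = 1\<^sub>m n" by (rule mat_mult_left_right_inverse[OF car(1,2) PQ[OF n]])
  have "similar_mat (Wc n c) (Dm n c)"
    unfolding similar_mat_def similar_mat_wit_def Let_def
    using car PQ[OF n] QP PDQ[OF n] by (intro exI[of _ "Pm n"] exI[of _ "Qm n"]) (auto simp: Wc_def)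
  hence "char_poly (Wc n c) = char_poly (Dm n c)" by (rule char_poly_similar)
  also have "\<dots> = (\<Prod>a\<leftarrow>diag_mat (Dm n c). [:- a, 1:])"
    by (rule char_poly_upper_triangular[OF car(3)]) (auto simp: upper_triangular_def Dm_def)
  also have "diag_mat (Dm n c) = 1 # replicate (n - 1) c"
  proof -
    obtain m where m: "n = Suc m" using n by (cases n) auto
    have "map (\<lambda>i. Dm n c $$ (i,i)) [1..<Suc m] = replicate m c"
      by (rule nth_equalityI) (auto simp: Dm_def m nth_upt simp del: upt_Suc)
    moreover have "Dm n c $$ (0,0) = 1" by (simp add: Dm_def m)
    moreover have "dim_row (Dm n c) = Suc m" by (simp add: Dm_def m)
    ultimately show ?thesis unfolding diag_mat_def
      by (simp add: upt_conv_Cons m del: upt_Suc)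
  qed
  finally show ?thesis by (simp add: prod_list_replicate)
qed


lemma Wc_in: assumes n: "n \<ge> 1" and c: "lm \<le> c" "c \<le> lp"
  shows "Wc n c \<in> W_set n lm lp"
proof -
  have "Wc n c *\<^sub>v ones_vec n = ones_vec n"
  proof (rule eq_vecI)
    fix i assume "i < dim_vec (ones_vec n)"
    hence i: "i < n" by (simp add: ones_vec_def)
    have "(Wc n c *\<^sub>v ones_vec n) $ i = (\<Sum>j<n. (if i = j then c else 0) + (1 - c) / real n)"
      using i by (simp add: Wc_def ones_vec_def scalar_prod_def atLeast0LessThan)
    also have "\<dots> = 1" using i n by (simp add: sum.distrib)
    finally show "(Wc n c *\<^sub>v ones_vec n) $ i = ones_vec n $ i" using i by (simp add: ones_vec_def)
  qed (simp add: Wc_def ones_vec_def)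
  moreover have "transpose_mat (Wc n c) = Wc n c"
    by (rule eq_matI) (auto simp: Wc_def)
  moreover have "char_poly (Wc n c) = [:-1, 1:] * (\<Prod>a\<in># replicate_mset (n - 1) c. [:-a, 1:])"
    by (simp add: char_poly_Wc[OF n])
  ultimately show ?thesis unfolding W_set_def using c
    by (intro CollectI conjI exI[of _ "replicate_mset (n - 1) c"]) (auto simp: Wc_def)
qed

lemma tmult_entry: assumes "A \<in> carrier_mat d m" "B \<in> carrier_mat d m'" "i < m" "j < m'"
  shows "(transpose_mat A * B) $$ (i,j) = (\<Sum>r<d. A $$ (r,i) * B $$ (r,j))"
  using assms by (simp add: scalar_prod_def atLeast0LessThan)

definition gram :: "real mat \<Rightarrow> real mat \<Rightarrow> real mat" where
  "gram Px Py = four_block_mat (transpose_mat Px * Px) (transpose_mat Px * Py)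
                        (transpose_mat Py * Px) (transpose_mat Py * Py)"

lemma psd_gram: assumes Px: "Px \<in> carrier_mat d N" and Py: "Py \<in> carrier_mat d N"
  shows "psd_mat (gram Px Py)"
proof -
  define B where "B = mat d (N + N) (\<lambda>(r,c). if c < N then Px $$ (r,c) else Py $$ (r, c - N))"
  have Bc: "B \<in> carrier_mat d (N + N)" by (simp add: B_def)
  have G: "gram Px Py = transpose_mat B * B"
  proof (rule eq_matI)
    fix i j assume "i < dim_row (transpose_mat B * B)" "j < dim_col (transpose_mat B * B)"
    hence i: "i < N + N" and j: "j < N + N" using Bc by auto
    show "gram Px Py $$ (i,j) = (transpose_mat B * B) $$ (i,j)"
      unfolding tmult_entry[OF Bc Bc i j] using i j Px Py
      by (auto simp: gram_def B_def scalar_prod_def atLeast0LessThan intro!: sum.cong)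
  qed (use Px Py Bc in \<open>auto simp: gram_def\<close>)
  have Gc: "gram Px Py \<in> carrier_mat (N + N) (N + N)" using Px Py by (simp add: gram_def)
  show ?thesis unfolding psd_mat_def
  proof (intro conjI ballI)
    show "gram Px Py \<in> carrier_mat (dim_row (gram Px Py)) (dim_row (gram Px Py))" using Gc by simp
    show "transpose_mat (gram Px Py) = gram Px Py" unfolding G
      using Bc by (simp add: transpose_mult)
    fix v :: "real vec" assume "v \<in> carrier_vec (dim_row (gram Px Py))"
    hence v: "v \<in> carrier_vec (N + N)" using Gc by simp
    have "v \<bullet> (gram Px Py *\<^sub>v v) = v \<bullet> (transpose_mat B *\<^sub>v (B *\<^sub>v v))"
      unfolding G using Bc v by (simp add: assoc_mult_mat_vec)
    also have "\<dots> = (transpose_mat B *\<^sub>v (B *\<^sub>v v)) \<bullet> v"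
      by (rule comm_scalar_prod[of _ "N + N"]) (use v Bc in auto)
    also have "\<dots> = (B *\<^sub>v v) \<bullet> (B *\<^sub>v v)"
      by (rule transpose_vec_mult_scalar[OF Bc v]) (use v Bc in auto)
    also have "\<dots> \<ge> 0" unfolding scalar_prod_def by (intro sum_nonneg) simp
    finally show "v \<bullet> (gram Px Py *\<^sub>v v) \<ge> 0" .
  qed
qed

lemma entries: fixes Px Py W :: "real mat" assumes Px: "Px \<in> carrier_mat d (n * K)" and Py: "Py \<in> carrier_mat d (n * K)"
  and K: "K \<ge> 1"
  and R: "\<forall>k<K. \<forall>i<n. \<forall>r<d. Py $$ (r, k * n + i) = (\<Sum>j<n. W $$ (i, j) * Px $$ (r, k * n + j))"
  and I: "\<forall>i<n. \<forall>l<n. (transpose_mat Px * Px) $$ (i,l) = (if i = l then 1 else 0)"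
  and i: "i < n" and j: "j < n"
  shows "(transpose_mat Px * Py) $$ (i,j) = W $$ (j,i)"
    "(transpose_mat Py * Py) $$ (i,j) = (\<Sum>l<n. W $$ (i,l) * W $$ (j,l))"
proof -
  have nK: "n \<le> n * K" using K by simp
  have R0: "Py $$ (r, l) = (\<Sum>m<n. W $$ (l, m) * Px $$ (r, m))" if "r < d" "l < n" for r l
    using R[rule_format, of 0 l r] K that by simp
  have I': "(\<Sum>r<d. Px $$ (r,i') * Px $$ (r,l)) = (if i' = l then 1 else 0)" if "i' < n" "l < n" for i' l
    using I[rule_format, OF that] tmult_entry[OF Px Px, of i' l] that nK by simp
  have A: "(transpose_mat Px * Py) $$ (i',j') = W $$ (j',i')" if i': "i' < n" and j': "j' < n" for i' j'
  proof -
    have "(transpose_mat Px * Py) $$ (i',j') = (\<Sum>r<d. Px $$ (r,i') * (\<Sum>m<n. W $$ (j', m) * Px $$ (r, m)))"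
      using tmult_entry[OF Px Py, of i' j'] i' j' nK R0 by simp
    also have "\<dots> = (\<Sum>r<d. \<Sum>m<n. W $$ (j', m) * (Px $$ (r,i') * Px $$ (r, m)))"
      unfolding sum_distrib_left by (intro sum.cong refl) (rule mult.left_commute)
    also have "\<dots> = (\<Sum>m<n. \<Sum>r<d. W $$ (j', m) * (Px $$ (r,i') * Px $$ (r, m)))"
      by (rule sum.swap)
    also have "\<dots> = (\<Sum>m<n. W $$ (j', m) * (\<Sum>r<d. Px $$ (r,i') * Px $$ (r, m)))"
      by (simp add: sum_distrib_left)
    also have "\<dots> = (\<Sum>m<n. if i' = m then W $$ (j', m) else 0)"
      by (rule sum.cong) (use I' i' in auto)
    also have "\<dots> = W $$ (j', i')" using i' by simp
    finally show ?thesis .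
  qed
  show "(transpose_mat Px * Py) $$ (i,j) = W $$ (j,i)" by (rule A[OF i j])
  have "(transpose_mat Py * Py) $$ (i,j) = (\<Sum>r<d. (\<Sum>m<n. W $$ (i, m) * Px $$ (r, m)) * Py $$ (r,j))"
    using tmult_entry[OF Py Py, of i j] i j nK R0 by simp
  also have "\<dots> = (\<Sum>r<d. \<Sum>m<n. W $$ (i, m) * (Px $$ (r,m) * Py $$ (r, j)))"
    unfolding sum_distrib_right by (intro sum.cong refl) (simp add: mult_ac)
  also have "\<dots> = (\<Sum>m<n. \<Sum>r<d. W $$ (i, m) * (Px $$ (r,m) * Py $$ (r, j)))"
    by (rule sum.swap)
  also have "\<dots> = (\<Sum>m<n. W $$ (i, m) * (\<Sum>r<d. Px $$ (r,m) * Py $$ (r, j)))"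
    by (simp add: sum_distrib_left)
  also have "\<dots> = (\<Sum>m<n. W $$ (i, m) * W $$ (j, m))"
    by (rule sum.cong) (use A j nK tmult_entry[OF Px Py] in auto)
  finally show "(transpose_mat Py * Py) $$ (i,j) = (\<Sum>l<n. W $$ (i,l) * W $$ (j,l))" .
qed


lemma gram_entries: assumes X: "X \<in> carrier_mat d N" and Y: "Y \<in> carrier_mat d N" and i: "i < N" and j: "j < N"
  shows "gram X Y $$ (i,j) = (transpose_mat X * X) $$ (i,j)"
    "gram X Y $$ (i,N+j) = (transpose_mat X * Y) $$ (i,j)"
    "gram X Y $$ (N+i,N+j) = (transpose_mat Y * Y) $$ (i,j)"
  using X Y i j by (auto simp: gram_def)

lemma gram_carrier: "X \<in> carrier_mat d N \<Longrightarrow> Y \<in> carrier_mat d N \<Longrightarrow> gram X Y \<in> carrier_mat (N+N) (N+N)"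
  by (simp add: gram_def)

theorem lemma1:
  fixes n K :: nat and lm lp :: real
  assumes "n \<ge> 2" and "K \<ge> 1" and "-1 < lm" and "lm < lp" and "lp < 1"
  shows "\<not> convex_mat_set (G_set n K lm lp)"
proof
  assume conv: "convex_mat_set (G_set n K lm lp)"
  have n: "n \<ge> 1" using assms by simp
  have K: "K \<ge> 1" using assms by simp
  define N where "N = n * K"
  have nN: "n \<le> N" using K by (simp add: N_def)
  define Pyc where "Pyc c = mat N N (\<lambda>(r,col). \<Sum>j<n. Wc n c $$ (col mod n, j) * (1\<^sub>m N) $$ (r, (col div n) * n + j))" for c
  have Pyc_car: "Pyc c \<in> carrier_mat N N" for c by (simp add: Pyc_def)
  have one_car: "(1\<^sub>m N :: real mat) \<in> carrier_mat N N" by simp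
  have R1: "\<forall>k<K. \<forall>i<n. \<forall>r<N. Pyc c $$ (r, k * n + i) = (\<Sum>j<n. Wc n c $$ (i, j) * (1\<^sub>m N) $$ (r, k * n + j))" for c
  proof (intro allI impI)
    fix k i r assume k: "k < K" and i: "i < n" and r: "r < N"
    have "k * n + i < (k + 1) * n" using i by simp
    also have "\<dots> \<le> K * n" using k by (intro mult_right_mono) auto
    finally have lt: "k * n + i < N" by (simp add: N_def mult.commute)
    have "(k * n + i) mod n = i" "(k * n + i) div n = k" using i by auto
    then show "Pyc c $$ (r, k * n + i) = (\<Sum>j<n. Wc n c $$ (i, j) * (1\<^sub>m N) $$ (r, k * n + j))"
      using lt r by (simp add: Pyc_def)
  qed
  have mem: "gram (1\<^sub>m N) (Pyc c) \<in> G_set n K lm lp" if c: "lm \<le> c" "c \<le> lp" for c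
  proof -
    have N1: "N \<ge> 1" using n K by (simp add: N_def)
    have car: "(1\<^sub>m N :: real mat) \<in> carrier_mat N (n * K)" "Pyc c \<in> carrier_mat N (n * K)"
      using one_car Pyc_car by (simp_all add: N_def)
    show ?thesis unfolding G_set_def
      apply (rule CollectI)
      apply (rule exI[of _ N], rule exI[of _ "1\<^sub>m N"], rule exI[of _ "Pyc c"], rule exI[of _ "Wc n c"])
      apply (intro conjI)
            apply (rule N1)
           apply (rule car(1))
          apply (rule car(2))
         apply (rule Wc_in[OF n c])
        apply (rule R1)
       apply (simp only: gram_def)
      apply (rule psd_gram[OF one_car Pyc_car])
      done
  qed
  define G1 where "G1 = gram (1\<^sub>m N) (Pyc lm)"
  define G2 where "G2 = gram (1\<^sub>m N) (Pyc lp)"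
  have "G1 \<in> G_set n K lm lp" "G2 \<in> G_set n K lm lp"
    unfolding G1_def G2_def using assms by (auto intro!: mem)
  with conv have "(1/2) \<cdot>\<^sub>m G1 + (1 - 1/2) \<cdot>\<^sub>m G2 \<in> G_set n K lm lp"
    unfolding convex_mat_set_def
  proof (elim ballE allE impE conjE)
    show "0 \<le> (1/2::real) \<and> (1/2::real) \<le> 1" by simp
  qed auto
  then obtain d Px Py W where Px: "Px \<in> carrier_mat d N" and Py: "Py \<in> carrier_mat d N"
    and R: "\<forall>k<K. \<forall>i<n. \<forall>r<d. Py $$ (r, k * n + i) = (\<Sum>j<n. W $$ (i, j) * Px $$ (r, k * n + j))"
    and G: "(1/2) \<cdot>\<^sub>m G1 + (1 - 1/2) \<cdot>\<^sub>m G2 = gram Px Py"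
    unfolding G_set_def gram_def N_def by blast
  have G1c: "G1 \<in> carrier_mat (N+N) (N+N)" "G2 \<in> carrier_mat (N+N) (N+N)"
    unfolding G1_def G2_def by (auto intro!: gram_carrier[OF one_car Pyc_car])
  have Gent: "gram Px Py $$ (a,b) = (1/2) * G1 $$ (a,b) + (1/2) * G2 $$ (a,b)" if "a < N+N" "b < N+N" for a b
    unfolding G[symmetric] using that G1c by simp
  have I1: "\<forall>i<n. \<forall>l<n. (transpose_mat (1\<^sub>m N) * (1\<^sub>m N :: real mat)) $$ (i,l) = (if i = l then 1 else 0)"
    using nN by simp
  note E1 = entries[of "1\<^sub>m N" N n K "Pyc c" "Wc n c" for c, unfolded N_def[symmetric], OF one_car Pyc_car K R1 I1]
  have IP: "\<forall>i<n. \<forall>l<n. (transpose_mat Px * Px) $$ (i,l) = (if i = l then 1 else 0)"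
  proof (intro allI impI)
    fix i l assume i: "i < n" and l: "l < n"
    have "(transpose_mat Px * Px) $$ (i,l) = gram Px Py $$ (i,l)" using gram_entries[OF Px Py] i l nN by simp
    also have "\<dots> = (1/2) * G1 $$ (i,l) + (1/2) * G2 $$ (i,l)" using Gent i l nN by simp
    also have "\<dots> = (if i = l then 1 else 0)"
      unfolding G1_def G2_def using gram_entries[OF one_car Pyc_car] i l nN by simp
    finally show "(transpose_mat Px * Px) $$ (i,l) = (if i = l then 1 else 0)" .
  qed
  note E = entries[of Px d n K Py W, unfolded N_def[symmetric], OF Px Py K R IP]
  have Wav: "W $$ (j,i) = (1/2) * Wc n lm $$ (j,i) + (1/2) * Wc n lp $$ (j,i)" if i: "i < n" and j: "j < n" for i j
  proof -
    have "W $$ (j,i) = gram Px Py $$ (i,N+j)" using E(1)[OF i j] gram_entries[OF Px Py] i j nN by simp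
    also have "\<dots> = (1/2) * G1 $$ (i,N+j) + (1/2) * G2 $$ (i,N+j)" using Gent i j nN by simp
    also have "\<dots> = (1/2) * Wc n lm $$ (j,i) + (1/2) * Wc n lp $$ (j,i)"
      unfolding G1_def G2_def using gram_entries[OF one_car Pyc_car] E1(1) i j nN by simp
    finally show ?thesis .
  qed
  have n0: "0 < n" using n by simp
  have g00: "gram X Y $$ (N,N) = (transpose_mat Y * Y) $$ (0,0)" if "X \<in> carrier_mat dd N" "Y \<in> carrier_mat dd N" for X Y dd
    using gram_entries(3)[OF that, of 0 0] n0 nN by simp
  have NN: "N < N + N" using n0 nN by simp
  define a where "a l = Wc n lm $$ (0,l)" for l
  define b where "b l = Wc n lp $$ (0,l)" for l
  have Wsq: "(\<Sum>l<n. W $$ (0,l) * W $$ (0,l)) = (1/2) * (\<Sum>l<n. a l * a l) + (1/2) * (\<Sum>l<n. b l * b l)"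
  proof -
    have "(\<Sum>l<n. W $$ (0,l) * W $$ (0,l)) = gram Px Py $$ (N,N)" using E(2)[OF n0 n0] g00[OF Px Py] by simp
    also have "\<dots> = (1/2) * G1 $$ (N,N) + (1/2) * G2 $$ (N,N)" using Gent NN by simp
    also have "\<dots> = (1/2) * (\<Sum>l<n. a l * a l) + (1/2) * (\<Sum>l<n. b l * b l)"
      unfolding G1_def G2_def a_def b_def using g00[OF one_car Pyc_car] E1(2)[OF n0 n0] by simp
    finally show ?thesis .
  qed
  have Wab: "W $$ (0,l) = (a l + b l) / 2" if "l < n" for l
    using Wav[OF that n0] by (simp add: a_def b_def)
  have "(\<Sum>l<n. (a l - b l)^2) = 2 * (\<Sum>l<n. a l * a l) + 2 * (\<Sum>l<n. b l * b l) - 4 * (\<Sum>l<n. W $$ (0,l) * W $$ (0,l))"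
  proof -
    have "(\<Sum>l<n. (a l - b l)^2) = (\<Sum>l<n. 2 * (a l * a l) + 2 * (b l * b l) - 4 * (W $$ (0,l) * W $$ (0,l)))"
      by (rule sum.cong) (auto simp: Wab power2_eq_square field_simps)
    also have "\<dots> = 2 * (\<Sum>l<n. a l * a l) + 2 * (\<Sum>l<n. b l * b l) - 4 * (\<Sum>l<n. W $$ (0,l) * W $$ (0,l))"
      by (simp add: sum.distrib sum_subtractf sum_distrib_left)
    finally show ?thesis .
  qed
  also have "\<dots> = 0" using Wsq by simp
  finally have "(\<Sum>l<n. (a l - b l)^2) = 0" .
  hence "(a 0 - b 0)^2 = 0" using n0 by (subst (asm) sum_nonneg_eq_0_iff) auto
  hence "a 0 = b 0" by simp
  hence "(lm - lp) * (1 - 1 / real n) = 0" using n0 by (simp add: a_def b_def Wc_def field_simps)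
  moreover have "1 - 1 / real n \<noteq> 0" using assms(1) by simp
  ultimately show False using assms(4) by simp
qed

end
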